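(* Let $G$ be a graph on vertex set $V=\{1,\ldots,N\}$ and $G_l$ a graph on $V$ with $E(G)\subseteq E(G_l)$. Suppose a path $P$ is an induced subgraph of $G$, with vertices $p_1,\ldots,p_n$ labelled in path order, such that $E(P^d)\subseteq E(G_l)$ for some positive integer $d$. If for each $i=1,\ldots,n-d-1$ the pair $\{p_i,p_{i+d}\}$ is focused on $V(P)$ with respect to $G$ and $G_l$, then the forces $\{p_i,p_{i+d}\}\rightarrow\{p_i,p_{i+d+1}\}$, $i=1,\ldots,n-d-1$, may be applied sequentially, and the resulting graph is \[G_{l_1}=G_l+\{\{p_i,p_{i+d+1}\}: 1\le i\le n-d-1\}.\] In particular, for every $A\in\mathcal{S}(G)$ and every $X\in\overline{\mathcal{S}_0}(G_l^c)$ with $AX-XA=0$, one has $X\in\overline{\mathcal{S}_0}(G_{l_1}^c)$.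
   Context: All graphs are finite, simple, undirected. For a graph $G$ on $\{1,\ldots,N\}$, $\mathcal{S}(G)$ is the set of real symmetric $N\times N$ matrices $A=(a_{ij})$ with $a_{ij}\neq0$ iff $\{i,j\}\in E(G)$ for $i\neq j$ (diagonal arbitrary). For a graph $H$ on $\{1,\ldots,N\}$, $\overline{\mathcal{S}_0}(H)$ is the set of real symmetric matrices whose $(i,j)$ entry is zero whenever $i=j$ or $\{i,j\}\notin E(H)$. $H^c$ is the complement of $H$. $P^d$ is the $d$-th power of $P$: the graph on $V(P)$ in which two vertices are adjacent iff their distance in $P$ is at most $d$. $N_G[v]$ is the closed neighbourhood of $v$, and $N_G[v]^c$ its complement in the vertex set. For nonempty $U\subseteq V$ and a graph $G'\supseteq G$ on $V$, a pair $\{i,j\}$ is focused on $U$ with respect to $G$ and $G'$ if $N_G[i]\cap N_{G'}[j]^c\subseteq U$ and $N_G[j]\cap N_{G'}[i]^c\subseteq U$. A force $\{i,j\}\rightarrow\{j,k\}$ with respect to $G$ and a current graph $G'\supseteq G$ on $V$ is valid when $i,j,k$ are pairwise distinct, $k\in N_G[i]$, and $\{i,j\}$ is focused on $\{k\}$ with respect to $G$ and $G'$; applying it replaces $G'$ by $G'+\{j,k\}$. (Known fact used to interpret forces: if $A\in\mathcal{S}(G)$, $X\in\overline{\mathcal{S}_0}(G'^c)$, $AX=XA$ and the force is valid, then $X\in\overline{\mathcal{S}_0}((G'+\{j,k\})^c)$.) *)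

theory Defs
  imports "HOL-Analysis.Analysis"
begin

text \<open>Graphs on the vertex set V = UNIV of a finite type 'n (standing for {1..N}),
  given by their edge sets: sets of 2-element subsets of V.\<close>

definition simple_graph :: "'n set set \<Rightarrow> bool" where
  "simple_graph E \<longleftrightarrow> (\<forall>e\<in>E. card e = 2)"

definition compl_graph :: "'n set set \<Rightarrow> 'n set set" where
  "compl_graph E = {{i, j} | i j. i \<noteq> j \<and> {i, j} \<notin> E}"

definition closed_nbhd :: "'n set set \<Rightarrow> 'n \<Rightarrow> 'n set" where
  "closed_nbhd E v = insert v {u. {u, v} \<in> E}"

definition focused :: "'n set set \<Rightarrow> 'n set set \<Rightarrow> 'n set \<Rightarrow> 'n \<Rightarrow> 'n \<Rightarrow> bool" where
  "focused G G' U i j \<longleftrightarrow>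
     closed_nbhd G i \<inter> - closed_nbhd G' j \<subseteq> U \<and>
     closed_nbhd G j \<inter> - closed_nbhd G' i \<subseteq> U"

definition valid_force :: "'n set set \<Rightarrow> 'n set set \<Rightarrow> 'n \<Rightarrow> 'n \<Rightarrow> 'n \<Rightarrow> bool" where
  "valid_force G G' i j k \<longleftrightarrow>
     i \<noteq> j \<and> j \<noteq> k \<and> i \<noteq> k \<and> k \<in> closed_nbhd G i \<and> focused G G' {k} i j"

text \<open>Apply a list of forces (i,j,k), i.e. {i,j} -> {j,k}, sequentially, each one required
  to be valid with respect to the current graph; None if some force is not valid.\<close>
fun apply_forces :: "'n set set \<Rightarrow> 'n set set \<Rightarrow> ('n \<times> 'n \<times> 'n) list \<Rightarrow> 'n set set option" where
  "apply_forces G G' [] = Some G'"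
| "apply_forces G G' ((i, j, k) # fs) =
     (if valid_force G G' i j k then apply_forces G (G' \<union> {{j, k}}) fs else None)"

definition S_pattern :: "'n set set \<Rightarrow> (real^'n^'n) set" where
  "S_pattern G = {A. transpose A = A \<and> (\<forall>i j. i \<noteq> j \<longrightarrow> (A $ i $ j \<noteq> 0 \<longleftrightarrow> {i, j} \<in> G))}"

definition S0_closure :: "'n set set \<Rightarrow> (real^'n^'n) set" where
  "S0_closure H = {X. transpose X = X \<and> (\<forall>i j. (i = j \<or> {i, j} \<notin> H) \<longrightarrow> X $ i $ j = 0)}"

definition induced_path :: "'n set set \<Rightarrow> (nat \<Rightarrow> 'n) \<Rightarrow> nat \<Rightarrow> bool" where
  "induced_path G p n \<longleftrightarrow> inj_on p {1..n} \<and>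
     (\<forall>i\<in>{1..n}. \<forall>j\<in>{1..n}. {p i, p j} \<in> G \<longleftrightarrow> (i = j + 1 \<or> j = i + 1))"

definition path_power_edges :: "(nat \<Rightarrow> 'n) \<Rightarrow> nat \<Rightarrow> nat \<Rightarrow> 'n set set" where
  "path_power_edges p n d = {{p i, p j} | i j. 1 \<le> i \<and> i < j \<and> j \<le> n \<and> j - i \<le> d}"

end

theory Submission
  imports Defs
begin

lemma S0c_iff:
  "X \<in> S0_closure (compl_graph H) \<longleftrightarrow> transpose X = X \<and> (\<forall>i j. (i = j \<or> {i, j} \<in> H) \<longrightarrow> X $ i $ j = 0)"
proof -
  have "\<And>i j. ({i, j} \<notin> compl_graph H) \<longleftrightarrow> (i = j \<or> {i, j} \<in> H)"
  proof -
    fix i j :: 'a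
    show "({i, j} \<notin> compl_graph H) \<longleftrightarrow> (i = j \<or> {i, j} \<in> H)"
      unfolding compl_graph_def
      by (auto simp: doubleton_eq_iff insert_commute)
  qed
  then show ?thesis unfolding S0_closure_def by blast
qed

lemma A_zero:
  assumes "A \<in> S_pattern G" "u \<notin> closed_nbhd G i"
  shows "A $ i $ u = 0"
proof -
  have "u \<noteq> i" "{u, i} \<notin> G" using assms(2) unfolding closed_nbhd_def by auto
  moreover have "{i, u} = {u, i}" by auto
  ultimately show ?thesis using assms(1) unfolding S_pattern_def by (metis (mono_tags, lifting) mem_Collect_eq)
qed

lemma X_zero:
  assumes "X \<in> S0_closure (compl_graph H)" "u \<in> closed_nbhd H j"
  shows "X $ u $ j = 0"
proof -
  have "u = j \<or> {u, j} \<in> H" using assms(2) unfolding closed_nbhd_def by auto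
  then show ?thesis using assms(1) unfolding S0c_iff by auto
qed

lemma force_matrix:
  fixes A X :: "real^'n::finite^'n"
  assumes A: "A \<in> S_pattern G" and X: "X \<in> S0_closure (compl_graph G')"
    and comm: "A ** X = X ** A" and sub: "G \<subseteq> G'"
    and vf: "valid_force G G' i j k"
  shows "X \<in> S0_closure (compl_graph (G' \<union> {{j, k}}))"
proof -
  have d: "i \<noteq> j" "j \<noteq> k" "i \<noteq> k" and kn: "k \<in> closed_nbhd G i"
    and f1: "closed_nbhd G i \<inter> - closed_nbhd G' j \<subseteq> {k}"
    and f2: "closed_nbhd G j \<inter> - closed_nbhd G' i \<subseteq> {k}"
    using vf unfolding valid_force_def focused_def by auto
  have eik: "{k, i} \<in> G" using kn d unfolding closed_nbhd_def by auto
  have Aik: "A $ i $ k \<noteq> 0"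
  proof -
    have "{i, k} \<in> G" using eik by (simp add: insert_commute)
    then show ?thesis using A d unfolding S_pattern_def by auto
  qed
  have Xik: "X $ i $ k = 0"
  proof -
    have "i \<in> closed_nbhd G' k" using eik sub unfolding closed_nbhd_def
      by (auto simp: insert_commute)
    then show ?thesis using X_zero[OF X] by blast
  qed
  have L: "(A ** X) $ i $ j = A $ i $ k * X $ k $ j"
  proof -
    have "(A ** X) $ i $ j = (\<Sum>u\<in>UNIV. A $ i $ u * X $ u $ j)"
      by (simp add: matrix_matrix_mult_def)
    also have "\<dots> = A $ i $ k * X $ k $ j + (\<Sum>u\<in>UNIV - {k}. A $ i $ u * X $ u $ j)"
      by (simp add: sum.remove)
    also have "(\<Sum>u\<in>UNIV - {k}. A $ i $ u * X $ u $ j) = 0"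
    proof (rule sum.neutral, intro ballI)
      fix u assume "u \<in> UNIV - {k}"
      then have "u \<notin> closed_nbhd G i \<or> u \<in> closed_nbhd G' j" using f1 by blast
      then show "A $ i $ u * X $ u $ j = 0" using A_zero[OF A] X_zero[OF X] by auto
    qed
    finally show ?thesis by simp
  qed
  have R: "(X ** A) $ i $ j = X $ i $ k * A $ k $ j"
  proof -
    have "(X ** A) $ i $ j = (\<Sum>u\<in>UNIV. X $ i $ u * A $ u $ j)"
      by (simp add: matrix_matrix_mult_def)
    also have "\<dots> = X $ i $ k * A $ k $ j + (\<Sum>u\<in>UNIV - {k}. X $ i $ u * A $ u $ j)"
      by (simp add: sum.remove)
    also have "(\<Sum>u\<in>UNIV - {k}. X $ i $ u * A $ u $ j) = 0"
    proof (rule sum.neutral, intro ballI)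
      fix u assume "u \<in> UNIV - {k}"
      then have "u \<notin> closed_nbhd G j \<or> u \<in> closed_nbhd G' i" using f2 by blast
      moreover have "transpose A = A" "transpose X = X" using A X unfolding S_pattern_def S0c_iff by auto
      then have "A $ u $ j = A $ j $ u" "X $ i $ u = X $ u $ i"
        by (metis transpose_def vec_lambda_beta)+
      ultimately show "X $ i $ u * A $ u $ j = 0" using A_zero[OF A] X_zero[OF X] by auto
    qed
    finally show ?thesis by simp
  qed
  have "A $ i $ k * X $ k $ j = 0" using L R Xik comm by simp
  then have Xkj: "X $ k $ j = 0" using Aik by simp
  have tX: "transpose X = X" using X unfolding S0c_iff by auto
  then have Xjk: "X $ j $ k = 0" using Xkj by (metis transpose_def vec_lambda_beta)
  show ?thesis unfolding S0c_iff
  proof (intro conjI tX allI impI)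
    fix a b assume "a = b \<or> {a, b} \<in> G' \<union> {{j, k}}"
    then consider "a = b \<or> {a, b} \<in> G'" | "{a, b} = {j, k}" by auto
    then show "X $ a $ b = 0"
    proof cases
      case 1 then show ?thesis using X unfolding S0c_iff by auto
    next
      case 2 then have "(a = j \<and> b = k) \<or> (a = k \<and> b = j)" by (auto simp: doubleton_eq_iff)
      then show ?thesis using Xkj Xjk by auto
    qed
  qed
qed

lemma forces_matrix:
  fixes A X :: "real^'n::finite^'n"
  assumes "apply_forces G G' fs = Some G''" "A \<in> S_pattern G" "X \<in> S0_closure (compl_graph G')"
    "A ** X = X ** A" "G \<subseteq> G'"
  shows "X \<in> S0_closure (compl_graph G'')"
  using assms
proof (induction fs arbitrary: G')
  case Nil then show ?case by simp
next
  case (Cons f fs)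
  obtain i j k where f: "f = (i, j, k)" by (cases f) auto
  have vf: "valid_force G G' i j k" and rest: "apply_forces G (G' \<union> {{j, k}}) fs = Some G''"
    using Cons.prems(1) f by (auto split: if_splits)
  have "X \<in> S0_closure (compl_graph (G' \<union> {{j, k}}))"
    using force_matrix[OF Cons.prems(2,3,4,5) vf] .
  then show ?case using Cons.IH[OF rest Cons.prems(2) _ Cons.prems(4)] Cons.prems(5) by blast
qed

definition Ek :: "(nat \<Rightarrow> 'n) \<Rightarrow> nat \<Rightarrow> nat \<Rightarrow> 'n set set" where
  "Ek p d a = {{p i, p (i + d + 1)} | i. 1 \<le> i \<and> i < a}"

lemma ppe_in:
  assumes "path_power_edges p n d \<subseteq> Gl" "1 \<le> i" "i < j" "j \<le> n" "j - i \<le> d"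
  shows "{p i, p j} \<in> Gl" "{p j, p i} \<in> Gl"
proof -
  show "{p i, p j} \<in> Gl" using assms unfolding path_power_edges_def by blast
  then show "{p j, p i} \<in> Gl" by (simp add: insert_commute)
qed

lemma valid_step:
  assumes ip: "induced_path G p n" and d: "d \<ge> 1" and pp: "path_power_edges p n d \<subseteq> Gl"
    and foc: "focused G Gl (p ` {1..n}) (p a) (p (a + d))"
    and a: "1 \<le> a" "a + d + 1 \<le> n"
  shows "valid_force G (Gl \<union> Ek p d a) (p (a + d)) (p a) (p (a + d + 1))"
proof -
  let ?G' = "Gl \<union> Ek p d a"
  have inj: "inj_on p {1..n}" and adj: "\<And>i j. i \<in> {1..n} \<Longrightarrow> j \<in> {1..n} \<Longrightarrow> {p i, p j} \<in> G \<longleftrightarrow> (i = j + 1 \<or> j = i + 1)"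
    using ip unfolding induced_path_def by auto
  have pinj: "\<And>i j. i \<in> {1..n} \<Longrightarrow> j \<in> {1..n} \<Longrightarrow> p i = p j \<longleftrightarrow> i = j"
    using inj by (meson inj_on_eq_iff)
  have dist: "p (a + d) \<noteq> p a" "p a \<noteq> p (a + d + 1)" "p (a + d) \<noteq> p (a + d + 1)"
    using pinj[of "a+d" a] pinj[of a "a+d+1"] pinj[of "a+d" "a+d+1"] a d by auto
  have kn: "p (a + d + 1) \<in> closed_nbhd G (p (a + d))"
    using adj[of "a+d+1" "a+d"] a unfolding closed_nbhd_def by auto
  have mono: "\<And>v. v \<notin> closed_nbhd ?G' w \<Longrightarrow> v \<notin> closed_nbhd Gl w" for w
    unfolding closed_nbhd_def by auto
  have foc1: "closed_nbhd G (p a) \<inter> - closed_nbhd Gl (p (a + d)) \<subseteq> p ` {1..n}"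
    and foc2: "closed_nbhd G (p (a + d)) \<inter> - closed_nbhd Gl (p a) \<subseteq> p ` {1..n}"
    using foc unfolding focused_def by auto
  have c1: "closed_nbhd G (p (a + d)) \<inter> - closed_nbhd ?G' (p a) \<subseteq> {p (a + d + 1)}"
  proof
    fix v assume v: "v \<in> closed_nbhd G (p (a + d)) \<inter> - closed_nbhd ?G' (p a)"
    then have "v \<in> p ` {1..n}" using foc2 mono by blast
    then obtain m where m: "m \<in> {1..n}" "v = p m" by auto
    have vn: "v \<notin> closed_nbhd ?G' (p a)" using v by blast
    have "m = a + d \<or> {p m, p (a + d)} \<in> G"
      using v m pinj[of m "a+d"] a unfolding closed_nbhd_def by auto
    then have "m = a + d \<or> m = a + d + 1 \<or> m + 1 = a + d"
      using adj[of m "a+d"] m a by auto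
    moreover
    have False if "m = a + d \<or> m + 1 = a + d"
    proof (cases "m = a")
      case True then show False using vn m unfolding closed_nbhd_def by auto
    next
      case False
      then have "a < m" "m - a \<le> d" using that d by auto
      then have "{p m, p a} \<in> Gl" using ppe_in(2)[OF pp a(1)] m by auto
      then show False using vn m unfolding closed_nbhd_def by auto
    qed
    ultimately show "v \<in> {p (a + d + 1)}" using m by auto
  qed
  have c2: "closed_nbhd G (p a) \<inter> - closed_nbhd ?G' (p (a + d)) \<subseteq> {p (a + d + 1)}"
  proof
    fix v assume v: "v \<in> closed_nbhd G (p a) \<inter> - closed_nbhd ?G' (p (a + d))"
    then have "v \<in> p ` {1..n}" using foc1 mono by blast
    then obtain m where m: "m \<in> {1..n}" "v = p m" by auto
    have vn: "v \<notin> closed_nbhd ?G' (p (a + d))" using v by blast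
    have "m = a \<or> {p m, p a} \<in> G"
      using v m pinj[of m a] a unfolding closed_nbhd_def by auto
    then have "m = a \<or> m = a + 1 \<or> m + 1 = a"
      using adj[of m a] m a by auto
    moreover
    have False if "m = a \<or> m = a + 1"
    proof (cases "m = a + d")
      case True then show False using vn m unfolding closed_nbhd_def by auto
    next
      case False
      then have "m < a + d" "a + d - m \<le> d" "1 \<le> m" using that d a by auto
      then have "{p m, p (a + d)} \<in> Gl" using ppe_in(1)[OF pp] a by auto
      then show False using vn m unfolding closed_nbhd_def by auto
    qed
    moreover
    have False if "m + 1 = a"
    proof -
      have "{p m, p (m + d + 1)} \<in> Ek p d a" unfolding Ek_def using that m by auto
      moreover have "m + d + 1 = a + d" using that by simp
      ultimately have "{p m, p (a + d)} \<in> ?G'" by auto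
      then show False using vn m unfolding closed_nbhd_def by auto
    qed
    ultimately show "v \<in> {p (a + d + 1)}" by blast
  qed
  show ?thesis unfolding valid_force_def focused_def using dist kn c1 c2 by auto
qed

lemma Ek_Suc: "Ek p d (Suc a) = Ek p d a \<union> (if 1 \<le> a then {{p a, p (a + d + 1)}} else {})"
  unfolding Ek_def by (auto simp: less_Suc_eq)

lemma iter_forces:
  assumes ip: "induced_path G p n" and d: "d \<ge> 1" and pp: "path_power_edges p n d \<subseteq> Gl"
    and foc: "\<forall>i\<in>{1..n - d - 1}. focused G Gl (p ` {1..n}) (p i) (p (i + d))"
  shows "1 \<le> a \<Longrightarrow> apply_forces G (Gl \<union> Ek p d a) (map (\<lambda>i. (p (i + d), p i, p (i + d + 1))) [a..<n - d])
           = Some (Gl \<union> Ek p d (max a (n - d)))"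
proof (induction "n - d - a" arbitrary: a)
  case 0
  then have "max a (n - d) = a" by simp
  then show ?case using 0 by simp
next
  case (Suc k)
  then have lt: "a < n - d" by simp
  have ups: "[a..<n - d] = a # [Suc a..<n - d]" using lt by (simp add: upt_conv_Cons)
  have vf: "valid_force G (Gl \<union> Ek p d a) (p (a + d)) (p a) (p (a + d + 1))"
    using valid_step[OF ip d pp _ Suc.prems] foc lt Suc.prems by auto
  have eq: "Gl \<union> Ek p d a \<union> {{p a, p (a + d + 1)}} = Gl \<union> Ek p d (Suc a)"
    using Ek_Suc[of p d a] Suc.prems by auto
  have IH: "apply_forces G (Gl \<union> Ek p d (Suc a)) (map (\<lambda>i. (p (i + d), p i, p (i + d + 1))) [Suc a..<n - d])
           = Some (Gl \<union> Ek p d (max (Suc a) (n - d)))"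
    using Suc.hyps(1)[of "Suc a"] Suc.hyps(2) by simp
  have "max (Suc a) (n - d) = max a (n - d)" using lt by simp
  then show ?case using IH vf eq ups by simp
qed

theorem corollary3p6:
  fixes G Gl :: "'n::finite set set" and p :: "nat \<Rightarrow> 'n" and n d :: nat
  assumes "simple_graph G" and "simple_graph Gl" and "G \<subseteq> Gl"
    and "n \<ge> 1" and "induced_path G p n"
    and "d \<ge> 1" and "path_power_edges p n d \<subseteq> Gl"
    and "\<forall>i\<in>{1..n - d - 1}. focused G Gl (p ` {1..n}) (p i) (p (i + d))"
  shows "apply_forces G Gl (map (\<lambda>i. (p (i + d), p i, p (i + d + 1))) [1..<n - d])
           = Some (Gl \<union> {{p i, p (i + d + 1)} | i. 1 \<le> i \<and> i \<le> n - d - 1})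
       \<and> (\<forall>A X. A \<in> S_pattern G \<longrightarrow> X \<in> S0_closure (compl_graph Gl) \<longrightarrow> A ** X - X ** A = 0
            \<longrightarrow> X \<in> S0_closure (compl_graph (Gl \<union> {{p i, p (i + d + 1)} | i. 1 \<le> i \<and> i \<le> n - d - 1})))"
proof -
  have e1: "Ek p d 1 = {}" unfolding Ek_def by auto
  have e2: "Ek p d (max 1 (n - d)) = {{p i, p (i + d + 1)} | i. 1 \<le> i \<and> i \<le> n - d - 1}"
    unfolding Ek_def by (rule Collect_cong) (auto simp: max_def)
  have AF: "apply_forces G Gl (map (\<lambda>i. (p (i + d), p i, p (i + d + 1))) [1..<n - d])
           = Some (Gl \<union> {{p i, p (i + d + 1)} | i. 1 \<le> i \<and> i \<le> n - d - 1})"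
    using iter_forces[OF assms(5,6,7,8), of 1] e1 e2 by simp
  show ?thesis
  proof (intro conjI AF allI impI)
    fix A X :: "real^'n^'n"
    assume "A \<in> S_pattern G" "X \<in> S0_closure (compl_graph Gl)" "A ** X - X ** A = 0"
    then show "X \<in> S0_closure (compl_graph (Gl \<union> {{p i, p (i + d + 1)} | i. 1 \<le> i \<and> i \<le> n - d - 1}))"
      using forces_matrix[OF AF] assms(3) by simp
  qed
qed

end
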